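(* Let $d \geq 1$ and $\epsilon \geq 0$, $\kappa > 0$ be real numbers. Let $\mathbf{h}_1, \mathbf{h}_2 \in \mathbb{R}^d$ be two state vectors of an RNN with unit Euclidean norm, and let $\tilde{\mathbf{h}}_1, \tilde{\mathbf{h}}_2 \in \{\pm 1\}^d$ be their saturated versions. Assume the RNN is $\epsilon$-saturated with respect to these states, i.e. $\|\mathbf{h}_i - \tilde{\mathbf{h}}_i\|_2 \leq \epsilon$ for $i \in \{1,2\}$. If $\cos(\mathbf{h}_1, \mathbf{h}_2) \geq 1 - \kappa$ with $$\sqrt{\kappa} < \sqrt{2}\left(\frac{1}{\sqrt{d}} - \epsilon\right),$$ then $\tilde{\mathbf{h}}_1 = \tilde{\mathbf{h}}_2$ (i.e. the two vectors represent the same state of the saturated RNN / DFA).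
   Context: An RNN state vector $\mathbf{h}(x,\theta) \in \mathbb{R}^d$ is viewed as a function of the input string $x$ and the parameter vector $\theta$ of the network (e.g. a simple RNN $\mathbf{h}_{i+1} = \tanh(U\mathbf{h}_i + V\mathbf{x}_{i+1})$). Its saturated version is $\tilde{\mathbf{h}}(x,\theta) = \lim_{\rho \to \infty} \mathbf{h}(x, \rho\theta)$, which for a $\tanh$ RNN takes values in $\{\pm 1\}^d$. Here $\cos(\mathbf{u},\mathbf{v}) = \mathbf{u}^\top \mathbf{v} / (\|\mathbf{u}\|_2 \|\mathbf{v}\|_2)$ denotes cosine similarity. *)

theory Defs
  imports "HOL-Analysis.Analysis"
begin

definition cos_sim :: "real ^ 'n \<Rightarrow> real ^ 'n \<Rightarrow> real" where
  "cos_sim u v = (u \<bullet> v) / (norm u * norm v)"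

definition sign_vector :: "real ^ 'n \<Rightarrow> bool" where
  "sign_vector v \<longleftrightarrow> (\<forall>i. v $ i = 1 \<or> v $ i = -1)"

end

theory Submission
  imports Defs
begin

theorem proposition1:
  fixes h1 h2 ht1 ht2 :: "real ^ 'n" and \<epsilon> \<kappa> :: real
  assumes "\<epsilon> \<ge> 0" and "\<kappa> > 0"
    and "norm h1 = 1" and "norm h2 = 1"
    and "sign_vector ht1" and "sign_vector ht2"
    and "norm (h1 - ht1) \<le> \<epsilon>" and "norm (h2 - ht2) \<le> \<epsilon>"
    and "cos_sim h1 h2 \<ge> 1 - \<kappa>"
    and "sqrt \<kappa> < sqrt 2 * (1 / sqrt (real CARD('n)) - \<epsilon>)"
  shows "ht1 = ht2"
proof (rule ccontr)
  assume ne: "ht1 \<noteq> ht2"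
  then obtain i where i: "ht1 $ i \<noteq> ht2 $ i" by (metis vec_eq_iff)
  have c2: "\<bar>(ht1 - ht2) $ i\<bar> = 2"
    using assms(5,6) i unfolding sign_vector_def by (metis abs_numeral add_uminus_conv_diff minus_diff_eq one_add_one abs_minus_cancel vector_minus_component diff_minus_eq_add)
  have "\<bar>(ht1 - ht2) $ i\<bar> \<le> norm (ht1 - ht2)" by (rule component_le_norm_cart)
  hence n2: "2 \<le> norm (ht1 - ht2)" using c2 by simp
  have dot: "h1 \<bullet> h2 \<ge> 1 - \<kappa>" using assms(3,4,9) by (simp add: cos_sim_def)
  have "norm (h1 - h2)^2 = norm h1 ^2 + norm h2^2 - 2 * (h1 \<bullet> h2)"
    by (simp add: power2_norm_eq_inner inner_diff_left inner_diff_right inner_commute)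
  hence "norm (h1 - h2)^2 \<le> (sqrt 2 * sqrt \<kappa>)^2"
    using dot assms(3,4) assms(2) by (simp add: power_mult_distrib)
  hence d12: "norm (h1 - h2) \<le> sqrt 2 * sqrt \<kappa>"
    by (rule power2_le_imp_le) (use assms(2) in simp)
  have tri: "norm (ht1 - ht2) \<le> norm (h1 - ht1) + norm (h1 - h2) + norm (h2 - ht2)"
  proof -
    have "ht1 - ht2 = (h1 - h2) - (h1 - ht1) + (h2 - ht2)" by simp
    hence "norm (ht1 - ht2) \<le> norm ((h1 - h2) - (h1 - ht1)) + norm (h2 - ht2)"
      by (metis norm_triangle_ineq)
    also have "... \<le> norm (h1 - h2) + norm (h1 - ht1) + norm (h2 - ht2)"
      by (rule add_right_mono[OF norm_triangle_ineq4])
    finally show ?thesis by simp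
  qed
  hence lt: "norm (ht1 - ht2) < 2 / sqrt (real CARD('n))"
  proof -
    have a: "norm (ht1 - ht2) \<le> sqrt 2 * sqrt \<kappa> + 2 * \<epsilon>" using tri d12 assms(7,8) by linarith
    have "sqrt 2 * sqrt \<kappa> < sqrt 2 * (sqrt 2 * (1 / sqrt (real CARD('n)) - \<epsilon>))"
      using assms(10) by simp
    also have "... = 2 * (1 / sqrt (real CARD('n)) - \<epsilon>)"
      by (simp only: mult.assoc[symmetric] real_sqrt_mult_self)
    finally have "sqrt 2 * sqrt \<kappa> < 2 / sqrt (real CARD('n)) - 2 * \<epsilon>" by simp
    thus ?thesis using a by linarith
  qed
  have "sqrt (real CARD('n)) \<ge> 1" by simp
  hence "2 / sqrt (real CARD('n)) \<le> 2" by (simp add: divide_le_eq)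
  thus False using lt n2 by simp
qed

end
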